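(* Let $q>27$ be an odd prime power and let $k$ be an integer satisfying $$(q^2-q+1)\left\lceil\frac{8(q+1)}{q-1}\log q\right\rceil\leq k\leq q^3+1,$$ where $\log$ denotes the natural logarithm. Then $\mathrm{PG}(2,q^2)$ contains semiovals of size $k$.
   Context: $\mathrm{PG}(2,q^2)$ is the Desarguesian projective plane over $\mathbb{F}_{q^2}$. A semioval is a non-empty pointset $\mathcal{S}$ such that for every $P\in\mathcal{S}$ there is a unique line $t_P$ with $\mathcal{S}\cap t_P=\{P\}$. *)

theory Defs
  imports Complex_Main "HOL-Computational_Algebra.Primes"
begin

text \<open>The Desarguesian projective plane PG(2,F) over a field F: points are
  the one-dimensional subspaces of F^3 (represented as the set of nonzero
  scalar multiples of a nonzero vector), lines are given by nonzero
  coefficient triples (a,b,c) and consist of the points satisfying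
  a x + b y + c z = 0.\<close>

definition proj_class :: "'a::field \<times> 'a \<times> 'a \<Rightarrow> ('a \<times> 'a \<times> 'a) set" where
  "proj_class v = {(c * fst v, c * fst (snd v), c * snd (snd v)) | c. c \<noteq> 0}"

definition pg_points :: "('a::field \<times> 'a \<times> 'a) set set" where
  "pg_points = {proj_class v | v. v \<noteq> (0, 0, 0)}"

definition pg_line :: "'a::field \<times> 'a \<times> 'a \<Rightarrow> ('a \<times> 'a \<times> 'a) set set" where
  "pg_line u = {P \<in> pg_points. \<exists>(x, y, z) \<in> P.
      fst u * x + fst (snd u) * y + snd (snd u) * z = 0}"

definition pg_lines :: "('a::field \<times> 'a \<times> 'a) set set set" where
  "pg_lines = {pg_line u | u. u \<noteq> (0, 0, 0)}"

definition semioval :: "('a::field \<times> 'a \<times> 'a) set set \<Rightarrow> bool" where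
  "semioval S \<longleftrightarrow> S \<noteq> {} \<and> S \<subseteq> pg_points \<and>
     (\<forall>P \<in> S. \<exists>!t. t \<in> pg_lines \<and> S \<inter> t = {P})"

end

theory Submission
  imports Defs "HOL-Computational_Algebra.Computational_Algebra"
begin


lemma power_card_field: "(x::'a::{field,finite}) ^ card (UNIV :: 'a set) = x"
proof (cases "x = 0")
  case False
  have "x * (\<Prod>y\<in>UNIV-{0}. x * y) = x * x ^ (card (UNIV :: 'a set) - 1) * \<Prod>(UNIV-{0})"
    by (simp add: prod.distrib mult_ac)
  also have "x * x ^ (card (UNIV :: 'a set) - 1) = x ^ Suc (card (UNIV :: 'a set) - 1)"
    by (subst power_Suc) auto
  also have "Suc (card (UNIV :: 'a set) - 1) = card (UNIV :: 'a set)"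
    using finite_UNIV_card_ge_0[where ?'a = 'a] by simp
  also have "(\<Prod>y\<in>UNIV-{0}. x * y) = (\<Prod>y\<in>UNIV-{0}. y)"
    by (rule prod.reindex_bij_witness[of _ "\<lambda>y. y / x" "\<lambda>y. x * y"]) (use False in auto)
  finally show ?thesis
    by simp
qed (use finite_UNIV_card_ge_0[where ?'a = 'a] in auto)

lemma roots_bound:
  fixes c b :: "'a::idom"
  assumes "e < d"
  shows "card {x. x ^ d = c * x ^ e + b} \<le> d"
proof -
  define p where "p = monom 1 d - monom c e - [:b:]"
  have ev: "poly p x = 0 \<longleftrightarrow> x ^ d = c * x ^ e + b" for x
    by (auto simp: p_def poly_monom algebra_simps)
  have "coeff p d = 1" using assms by (cases d) (simp_all add: p_def coeff_monom)
  hence "p \<noteq> 0" by auto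
  have "degree p \<le> d" unfolding p_def
    using assms by (intro degree_diff_le degree_monom_le) (auto intro: degree_monom_le order.trans)
  have "card {x. poly p x = 0} \<le> degree p" by (rule card_poly_roots_bound[OF \<open>p \<noteq> 0\<close>])
  with ev \<open>degree p \<le> d\<close> show ?thesis by simp
qed

lemma card_fibres:
  assumes "finite A" "\<And>b. b \<in> f ` A \<Longrightarrow> card {x\<in>A. f x = b} = c"
  shows "card A = card (f ` A) * c"
proof -
  have "A = (\<Union>b\<in>f ` A. {x\<in>A. f x = b})" by auto
  moreover have "card (\<Union>b\<in>f ` A. {x\<in>A. f x = b}) = (\<Sum>b\<in>f ` A. card {x\<in>A. f x = b})"
    by (rule card_UN_disjoint) (use assms(1) in auto)
  ultimately have "card A = (\<Sum>b\<in>f ` A. card {x\<in>A. f x = b})" by simp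
  also have "\<dots> = (\<Sum>b\<in>f ` A. c)" using assms(2) by simp
  finally show ?thesis by simp
qed

lemma nat_prod_eq:
  fixes a b m n :: nat
  assumes "a \<le> m" "b \<le> n" "a * b = m * n" "n > 0" "m > 0"
  shows "a = m \<and> b = n"
proof -
  have "a * b \<le> a * n" by (rule mult_le_mono2) (rule assms(2))
  moreover have "a * n \<le> m * n" by (rule mult_le_mono1) (rule assms(1))
  ultimately have "a * n = m * n" using assms by linarith
  hence "a = m" using assms(4) mult_right_cancel by blast
  thus ?thesis using assms by simp
qed

context
  fixes q :: nat
  assumes cardF: "card (UNIV :: 'a::{field,finite} set) = q^2"
  and frob: "\<And>x y::'a. (x+y)^q = x^q + y^q"
  and q2: "q \<ge> 2"
begin

lemma pq2: "(x::'a) ^ (q*q) = x"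
  using power_card_field[of x] cardF by (simp add: power2_eq_square)

lemma pqq: "((x::'a)^q)^q = x"
  by (simp add: pq2 flip: power_mult)

lemma frob_neg: "(-(x::'a))^q = -(x^q)"
proof -
  have "(x + (-x))^q = x^q + (-x)^q" by (rule frob)
  moreover have "(0::'a)^q = 0" using q2 by simp
  ultimately have "0 = x^q + (-x)^q" by simp
  thus ?thesis by (simp add: eq_neg_iff_add_eq_0 add.commute)
qed

lemma frob_diff: "((x::'a) - y)^q = x^q - y^q"
  using frob[of x "-y"] frob_neg[of y] by simp

definition KK :: "'a set" where "KK = {a. a^q = a}"

lemma T_in_K: "(y::'a)^q + y \<in> KK"
  unfolding KK_def by (simp add: frob pqq add.commute)

lemma N_in_K: "(x::'a)^(q+1) \<in> KK"
proof -
  have "(x^(q+1))^q = (x^q)^q * x^q" by (simp add: power_mult_distrib flip: power_mult)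
  thus ?thesis unfolding KK_def by (simp add: pqq)
qed

lemma card_KK: "card KK \<le> q"
proof -
  have "KK = {x. x ^ q = 1 * x ^ 1 + (0::'a)}" by (auto simp: KK_def)
  thus ?thesis using roots_bound[of 1 q "1::'a" 0] q2 by simp
qed

lemma zero_KK: "(0::'a) \<in> KK" using q2 by (simp add: KK_def)

lemma T_fibre: assumes "a \<in> KK" shows "card {y::'a. y^q + y = a} = q"
proof -
  define T where "T = (\<lambda>y::'a. y^q + y)"
  define Z where "Z = {z::'a. T z = 0}"
  have Tadd: "T (x + y) = T x + T y" for x y by (simp add: T_def frob)
  have cZ: "card Z \<le> q"
  proof -
    have "Z = {x. x ^ q = (-1) * x ^ 1 + (0::'a)}" by (auto simp: Z_def T_def eq_neg_iff_add_eq_0)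
    thus ?thesis using roots_bound[of 1 q "-1::'a" 0] q2 by simp
  qed
  have fib: "card {x\<in>UNIV. T x = b} = card Z" if "b \<in> T ` UNIV" for b
  proof -
    from that obtain y0 where b: "b = T y0" by auto
    have "{x\<in>UNIV. T x = b} = (\<lambda>z. y0 + z) ` Z"
    proof (rule equalityI; rule subsetI)
      fix x assume "x \<in> {x\<in>UNIV. T x = b}"
      hence "T (x - y0) = 0" using Tadd[of "x - y0" y0] b by simp
      thus "x \<in> (\<lambda>z. y0 + z) ` Z" unfolding Z_def by (intro image_eqI[of _ _ "x - y0"]) auto
    next
      fix x assume "x \<in> (\<lambda>z. y0 + z) ` Z"
      then obtain z where "z \<in> Z" "x = y0 + z" by auto
      thus "x \<in> {x\<in>UNIV. T x = b}" using Tadd[of y0 z] b by (simp add: Z_def)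
    qed
    thus ?thesis by (simp add: card_image)
  qed
  have "card (UNIV::'a set) = card (T ` UNIV) * card Z"
    by (rule card_fibres) (use fib in auto)
  hence eq: "card (T ` UNIV) * card Z = q * q" using cardF by (simp add: power2_eq_square)
  have sub: "T ` UNIV \<subseteq> KK" using T_in_K by (auto simp: T_def)
  hence "card (T ` UNIV) \<le> q" using card_KK card_mono[OF _ sub] by force
  from nat_prod_eq[OF this cZ eq] q2 have "card (T ` UNIV) = q" "card Z = q" by auto
  hence "T ` UNIV = KK" using sub card_KK by (intro card_seteq) simp_all
  with assms have "a \<in> T ` UNIV" by simp
  from fib[OF this] \<open>card Z = q\<close> show ?thesis by (simp add: T_def)
qed

lemma N_fibre: assumes "a \<in> KK" "a \<noteq> 0" shows "card {x::'a. x^(q+1) = a} = q + 1"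
proof -
  define N where "N = (\<lambda>y::'a. y^(q+1))"
  define Z where "Z = {z::'a. N z = 1}"
  define A where "A = (UNIV::'a set) - {0}"
  have Nmul: "N (x * y) = N x * N y" for x y by (simp add: N_def power_mult_distrib)
  have cZ: "card Z \<le> q + 1"
  proof -
    have "Z = {x. x ^ (q+1) = 0 * x ^ 0 + (1::'a)}" by (auto simp: Z_def N_def)
    thus ?thesis using roots_bound[of 0 "q+1" "0::'a" 1] by simp
  qed
  have fib: "card {x\<in>A. N x = b} = card Z" if "b \<in> N ` A" for b
  proof -
    from that obtain y0 where b: "b = N y0" "y0 \<noteq> 0" by (auto simp: A_def)
    have "{x\<in>A. N x = b} = (\<lambda>z. y0 * z) ` Z"
    proof (rule equalityI; rule subsetI)
      fix x assume "x \<in> {x\<in>A. N x = b}"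
      hence "N (x / y0) = 1" using Nmul[of "x / y0" y0] b by (auto simp: N_def power_divide)
      thus "x \<in> (\<lambda>z. y0 * z) ` Z" unfolding Z_def using b by (intro image_eqI[of _ _ "x / y0"]) auto
    next
      fix x assume "x \<in> (\<lambda>z. y0 * z) ` Z"
      then obtain z where "z \<in> Z" "x = y0 * z" by auto
      thus "x \<in> {x\<in>A. N x = b}" using Nmul[of y0 z] b by (auto simp: Z_def A_def N_def)
    qed
    thus ?thesis by (simp add: card_image inj_on_def b)
  qed
  have "card A = card (N ` A) * card Z"
    by (rule card_fibres) (use fib in auto)
  moreover have "card A = q * q - 1" unfolding A_def using cardF
    by (simp add: card_Diff_singleton power2_eq_square)
  moreover have "q * q - 1 = (q - 1) * (q + 1)" using q2 by (cases q) auto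
  ultimately have eq: "card (N ` A) * card Z = (q - 1) * (q + 1)" by simp
  have sub: "N ` A \<subseteq> KK - {0}" using N_in_K by (auto simp: N_def A_def)
  have "card (KK - {0}) \<le> q - 1" using card_KK zero_KK by (simp add: card_Diff_singleton)
  hence "card (N ` A) \<le> q - 1" using card_mono[OF _ sub] by force
  from nat_prod_eq[OF this cZ eq] q2 have c1: "card (N ` A) = q - 1" and "card Z = q + 1" by auto
  have "N ` A = KK - {0}"
    using sub c1 \<open>card (KK - {0}) \<le> q - 1\<close> by (intro card_seteq) simp_all
  with assms have "a \<in> N ` A" by simp
  from fib[OF this] \<open>card Z = q + 1\<close> have "card {x\<in>A. N x = a} = q + 1" by simp
  moreover have "{x\<in>A. N x = a} = {x::'a. x^(q+1) = a}" using assms by (auto simp: A_def N_def)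
  ultimately show ?thesis by simp
qed

end



abbreviation pc :: "'a::field \<times> 'a \<times> 'a \<Rightarrow> ('a \<times> 'a \<times> 'a) set" where "pc \<equiv> proj_class"

lemma self_in_pc: "v \<in> pc v"
  unfolding proj_class_def by (cases v) (auto intro: exI[of _ 1])

lemma in_pc: "w \<in> pc v \<longleftrightarrow> (\<exists>c. c \<noteq> 0 \<and> w = (c * fst v, c * fst (snd v), c * snd (snd v)))"
  unfolding proj_class_def by auto

lemma pc_in_points: "v \<noteq> (0,0,0) \<Longrightarrow> pc v \<in> pg_points"
  unfolding pg_points_def by blast

lemma pc_scale: assumes "s \<noteq> 0" shows "pc (s*x, s*y, s*z) = pc (x,y,(z::'a::field))"
proof (rule equalityI; rule subsetI)
  fix w assume "w \<in> pc (s*x, s*y, s*z)"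
  then obtain c where "c \<noteq> 0" "w = (c*(s*x), c*(s*y), c*(s*z))" by (auto simp: in_pc)
  thus "w \<in> pc (x,y,z)" using assms unfolding in_pc by (intro exI[of _ "c*s"]) (auto simp: mult.assoc)
next
  fix w assume "w \<in> pc (x,y,z)"
  then obtain c where "c \<noteq> 0" "w = (c*x, c*y, c*z)" by (auto simp: in_pc)
  thus "w \<in> pc (s*x, s*y, s*z)" using assms unfolding in_pc by (intro exI[of _ "c/s"]) auto
qed

lemma pc_aff_inj: "pc (x,y,1) = pc (x',y',1) \<Longrightarrow> x = x' \<and> y = (y'::'a::field)"
proof -
  assume "pc (x,y,1) = pc (x',y',1)"
  hence "(x',y',1) \<in> pc (x,y,1)" using self_in_pc by metis
  then obtain c where "c \<noteq> 0" "(x',y',1::'a) = (c*x, c*y, c*1)" by (auto simp: in_pc)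
  thus ?thesis by auto
qed

lemma pc_aff_inf: "pc (x,y,1) \<noteq> pc (0,1,0::'a::field)"
proof
  assume "pc (x,y,1) = pc (0,1,0::'a)"
  hence "(0,1,0) \<in> pc (x,y,1::'a)" using self_in_pc by metis
  then obtain c where "c \<noteq> 0" "(0,1,0::'a) = (c*x, c*y, c*1)" by (auto simp: in_pc)
  thus False by auto
qed

lemma pc_in_line: 
  fixes u v :: "'a::field \<times> 'a \<times> 'a"
  assumes "v \<noteq> (0,0,0)"
  shows "pc v \<in> pg_line u \<longleftrightarrow> fst u * fst v + fst (snd u) * fst (snd v) + snd (snd u) * snd (snd v) = 0"
proof
  assume "pc v \<in> pg_line u"
  then obtain x y z where xyz: "(x,y,z) \<in> pc v" "fst u * x + fst (snd u) * y + snd (snd u) * z = 0"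
    unfolding pg_line_def by auto
  then obtain c where c: "c \<noteq> 0" "(x,y,z) = (c * fst v, c * fst (snd v), c * snd (snd v))"
    by (auto simp: in_pc)
  hence "c * (fst u * fst v + fst (snd u) * fst (snd v) + snd (snd u) * snd (snd v)) = 0"
    using xyz(2) by (simp add: algebra_simps)
  thus "fst u * fst v + fst (snd u) * fst (snd v) + snd (snd u) * snd (snd v) = 0" using c by simp
next
  assume eq: "fst u * fst v + fst (snd u) * fst (snd v) + snd (snd u) * snd (snd v) = 0"
  have "v \<in> pc v" by (rule self_in_pc)
  moreover obtain x y z where "v = (x,y,z)" by (cases v) auto
  ultimately show "pc v \<in> pg_line u" using eq assms unfolding pg_line_def
    by (auto intro!: pc_in_points bexI[of _ v])
qed

lemma aff_in_line: "pc (x,y,1) \<in> pg_line (a,b,c) \<longleftrightarrow> a*x + b*y + c = (0::'a::field)"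
  by (subst pc_in_line) auto

lemma inf_in_line: "pc (0,1,0) \<in> pg_line (a,b,c) \<longleftrightarrow> b = (0::'a::field)"
  by (subst pc_in_line) auto

lemma line_scale: assumes "s \<noteq> 0" shows "pg_line (s*a, s*b, s*c) = pg_line (a,b,(c::'a::field))"
proof -
  have e: "s*a*x + s*b*y + s*c*z = 0 \<longleftrightarrow> a*x+b*y+c*z = 0" for x y z
  proof -
    have "s*a*x + s*b*y + s*c*z = s*(a*x+b*y+c*z)" by (simp add: algebra_simps)
    thus ?thesis using assms by simp
  qed
  show ?thesis unfolding pg_line_def by (simp add: e)
qed

lemma points_cases:
  assumes "P \<in> pg_points"
  shows "(\<exists>x y. P = pc (x,y,1)) \<or> (\<exists>x. P = pc (x,1,0)) \<or> P = pc (1,0,(0::'a::field))"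
proof -
  from assms obtain x y z where P: "P = pc (x,y,z)" "(x,y,z) \<noteq> (0,0,0)" unfolding pg_points_def by auto
  have sc: "pc (x,y,z) = pc ((1/s)*x, (1/s)*y, (1/s)*z)" if "s \<noteq> 0" for s
    using that by (subst pc_scale) auto
  show ?thesis
  proof (cases "z = 0")
    case False thus ?thesis using sc[OF False] P by auto
  next
    case z: True
    show ?thesis
    proof (cases "y = 0")
      case False thus ?thesis using sc[OF False] P z by auto
    next
      case True
      hence x0: "x \<noteq> 0" using P z by auto
      show ?thesis using sc[OF x0] P z True x0 by auto
    qed
  qed
qed

lemma lines_cases:
  assumes "l \<in> pg_lines"
  shows "(\<exists>m b. l = pg_line (-m, 1, -b)) \<or> (\<exists>c. l = pg_line (1, 0, -c)) \<or> l = pg_line (0, 0, (1::'a::field))"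
proof -
  from assms obtain a b c where l: "l = pg_line (a,b,c)" "(a,b,c) \<noteq> (0,0,0)" unfolding pg_lines_def by auto
  show ?thesis
  proof (cases "b = 0")
    case False
    have "l = pg_line ((1/b)*a, (1/b)*b, (1/b)*c)" using l False by (subst line_scale) auto
    hence "l = pg_line (-(-(a/b)), 1, -(-(c/b)))" using False by simp
    thus ?thesis by blast
  next
    case b: True
    show ?thesis
    proof (cases "a = 0")
      case False
      have "l = pg_line ((1/a)*a, (1/a)*b, (1/a)*c)" using l False by (subst line_scale) auto
      hence "l = pg_line (1, 0, -(-(c/a)))" using False b by simp
      thus ?thesis by blast
    next
      case True
      hence "c \<noteq> 0" using l b by auto
      have "l = pg_line ((1/c)*a, (1/c)*b, (1/c)*c)" using l \<open>c \<noteq> 0\<close> by (subst line_scale) auto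
      thus ?thesis using True b \<open>c \<noteq> 0\<close> by simp
    qed
  qed
qed

definition herm :: "nat \<Rightarrow> ('a::field \<times> 'a \<times> 'a) set set" where
  "herm q = {pc (x,y,1) | x y. y^q + y = x^(q+1)} \<union> {pc (0,1,0)}"

lemma herm_points: "herm q \<subseteq> pg_points"
  unfolding herm_def by (auto intro!: pc_in_points)

lemma herm_I1: "pg_line (-m, 1, -b) \<inter> herm q =
   (\<lambda>x. pc (x, m*x+b, 1)) ` {x. (m*x+b)^q + (m*x+b) = x^(q+1)}" (is "?L = ?R")
proof (rule equalityI; rule subsetI)
  fix P assume "P \<in> ?L"
  hence P: "P \<in> pg_line (-m,1,-b)" "P \<in> herm q" by auto
  from P(2) show "P \<in> ?R" unfolding herm_def
  proof (elim UnE)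
    assume "P \<in> {pc (0,1,0)}" with P(1) show ?thesis by (simp add: inf_in_line)
  next
    assume "P \<in> {pc (x,y,1) | x y. y^q + y = x^(q+1)}"
    then obtain x y where xy: "P = pc (x,y,1)" "y^q + y = x^(q+1)" by auto
    with P(1) have "y = m*x+b" by (simp add: aff_in_line algebra_simps)
    with xy show ?thesis by auto
  qed
next
  fix P assume "P \<in> ?R"
  then obtain x where "P = pc (x, m*x+b, 1)" "(m*x+b)^q + (m*x+b) = x^(q+1)" by auto
  thus "P \<in> ?L" unfolding herm_def by (auto simp: aff_in_line)
qed

lemma herm_I2: "pg_line (1, 0, -c) \<inter> herm q =
   insert (pc (0,1,0)) ((\<lambda>y. pc (c, y, 1)) ` {y. y^q + y = c^(q+1)})" (is "?L = ?R")
proof (rule equalityI; rule subsetI)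
  fix P assume "P \<in> ?L"
  hence P: "P \<in> pg_line (1,0,-c)" "P \<in> herm q" by auto
  from P(2) show "P \<in> ?R" unfolding herm_def
  proof (elim UnE)
    assume "P \<in> {pc (0,1,0)}" thus ?thesis by simp
  next
    assume "P \<in> {pc (x,y,1) | x y. y^q + y = x^(q+1)}"
    then obtain x y where xy: "P = pc (x,y,1)" "y^q + y = x^(q+1)" by auto
    with P(1) have "x = c" by (simp add: aff_in_line)
    with xy show ?thesis by auto
  qed
next
  fix P assume "P \<in> ?R"
  thus "P \<in> ?L" unfolding herm_def by (auto simp: aff_in_line inf_in_line)
qed

lemma herm_I3: "pg_line (0, 0, 1) \<inter> herm q = {pc (0,1,(0::'a::field))}"
  unfolding herm_def by (auto simp: aff_in_line inf_in_line)




context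
  fixes q :: nat
  assumes cardF: "card (UNIV :: 'a::{field,finite} set) = q^2"
  and frob: "\<And>x y::'a. (x+y)^q = x^q + y^q"
  and q2: "q \<ge> 2"
begin

lemmas pqq' = pqq[OF cardF frob q2]
lemmas frob_diff' = frob_diff[OF cardF frob q2]
lemmas T_fibre' = T_fibre[OF cardF frob q2]
lemmas N_fibre' = N_fibre[OF cardF frob q2]
lemmas T_in_K' = T_in_K[OF cardF frob q2]
lemmas N_in_K' = N_in_K[OF cardF frob q2]

lemmas KK_def' = KK_def[OF cardF frob q2]
lemma KK_add: "a \<in> KK q \<Longrightarrow> b \<in> KK q \<Longrightarrow> (a::'a) + b \<in> KK q"
  using frob[of a b] by (simp add: KK_def')

lemma key_iff: "((m*x+b)^q + (m*x+b) = x^(q+1)) \<longleftrightarrow> ((x - m^q)^(q+1) = b^q + b + m^(q+1))"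
  for m x b :: 'a
proof -
  define X where "X = x^q"
  define M where "M = m^q"
  have e1: "(m*x+b)^q = M * X + b^q" by (simp add: frob power_mult_distrib M_def X_def)
  have e2: "(x - m^q)^(q+1) = (X - m) * (x - M)"
    by (simp add: frob_diff' pqq' X_def M_def)
  have e3: "x^(q+1) = X * x" "m^(q+1) = M * m" by (simp_all add: X_def M_def)
  have d: "(X - m)*(x - M) - (b^q + b + M*m) = X*x - (M*X + b^q + (m*x+b))" by (simp add: algebra_simps)
  have "(M*X + b^q + (m*x+b) = X*x) \<longleftrightarrow> (X*x - (M*X + b^q + (m*x+b)) = 0)" by auto
  also have "\<dots> \<longleftrightarrow> ((X - m)*(x - M) - (b^q + b + M*m) = 0)" by (simp only: d)
  also have "\<dots> \<longleftrightarrow> ((X - m)*(x - M) = b^q + b + M*m)" by simp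
  finally have calc: "(M*X + b^q + (m*x+b) = X*x) \<longleftrightarrow> ((X - m)*(x - M) = b^q + b + M*m)" .
  show ?thesis by (subst e1, subst e2, subst e3(1), subst e3(2), rule calc)
qed

lemma line_set: "{x::'a. (m*x+b)^q + (m*x+b) = x^(q+1)} = (\<lambda>w. w + m^q) ` {w. w^(q+1) = b^q+b+m^(q+1)}"
proof (rule equalityI; rule subsetI)
  fix x assume "x \<in> {x::'a. (m*x+b)^q + (m*x+b) = x^(q+1)}"
  hence "x - m^q \<in> {w. w^(q+1) = b^q+b+m^(q+1)}" using key_iff by simp
  thus "x \<in> (\<lambda>w. w + m^q) ` {w. w^(q+1) = b^q+b+m^(q+1)}" by (intro image_eqI[of _ _ "x - m^q"]) auto
next
  fix x assume "x \<in> (\<lambda>w. w + m^q) ` {w. w^(q+1) = b^q+b+m^(q+1)}"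
  then obtain w where "w^(q+1) = b^q+b+m^(q+1)" "x = w + m^q" by auto
  thus "x \<in> {x::'a. (m*x+b)^q + (m*x+b) = x^(q+1)}" using key_iff[of m x b] by simp
qed

lemma N_zero: "{w::'a. w^(q+1) = 0} = {0}" by auto

lemma card_line_set: "card {x::'a. (m*x+b)^q + (m*x+b) = x^(q+1)} = (if b^q+b+m^(q+1) = 0 then 1 else q+1)"
proof -
  have inj: "inj_on (\<lambda>w::'a. w + m^q) A" for A by (auto simp: inj_on_def)
  have K: "b^q+b+m^(q+1) \<in> KK q" by (intro KK_add T_in_K' N_in_K')
  show ?thesis unfolding line_set card_image[OF inj]
    using N_fibre'[OF K] N_zero by auto
qed

lemma line_set_zero: "b^q+b+m^(q+1) = 0 \<Longrightarrow> {x::'a. (m*x+b)^q + (m*x+b) = x^(q+1)} = {m^q}"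
  unfolding line_set using N_zero by simp

lemma card_I1: "card (pg_line (-m, 1, -b) \<inter> herm q) = (if b^q+b+m^(q+1) = 0 then 1 else q+(1::nat))"
  for m b :: 'a
proof -
  have inj: "inj_on (\<lambda>x. pc (x, m*x+b, 1)) A" for A by (auto simp: inj_on_def dest: pc_aff_inj)
  show ?thesis unfolding herm_I1 card_image[OF inj] card_line_set ..
qed

lemma card_I2: "card (pg_line (1, 0, -c) \<inter> herm q) = q + 1" for c :: 'a
proof -
  have inj: "inj_on (\<lambda>y. pc (c, y, 1)) A" for A by (auto simp: inj_on_def dest: pc_aff_inj)
  have "card {y. y^q + y = c^(q+1)} = q" by (intro T_fibre' N_in_K')
  moreover have "pc (0,1,0) \<notin> (\<lambda>y. pc (c, y, 1)) ` {y. y^q + y = c^(q+1)}" using pc_aff_inf by fastforce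
  ultimately show ?thesis unfolding herm_I2 by (simp add: card_image[OF inj])
qed

lemma line_card: "l \<in> (pg_lines :: ('a \<times> 'a \<times> 'a) set set set) \<Longrightarrow> card (l \<inter> herm q) = 1 \<or> card (l \<inter> herm q) = q + 1"
proof -
  assume l: "l \<in> (pg_lines :: ('a \<times> 'a \<times> 'a) set set set)"
  from lines_cases[OF l] show ?thesis
  proof (elim disjE exE)
    fix m b assume "l = pg_line (-m,1,-b)" thus ?thesis using card_I1[of m b] by simp
  next
    fix c assume "l = pg_line (1,0,-c)" thus ?thesis using card_I2[of c] by simp
  next
    assume "l = pg_line (0,0,1)" thus ?thesis by (simp add: herm_I3)
  qed
qed

lemma line1_in: "pg_line (-m, 1, -b) \<in> (pg_lines :: ('a \<times> 'a \<times> 'a) set set set)" for m b :: 'a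
  unfolding pg_lines_def by force

lemma line3_in: "pg_line (0, 0, 1) \<in> (pg_lines :: ('a \<times> 'a \<times> 'a) set set set)"
  unfolding pg_lines_def by force

lemma tangent_unique: "P \<in> herm q \<Longrightarrow> \<exists>!l. l \<in> (pg_lines :: ('a \<times> 'a \<times> 'a) set set set) \<and> l \<inter> herm q = {P}"
proof -
  assume "P \<in> herm q"
  then consider (inf) "P = pc (0,1,0)" | (aff) x0 y0 where "P = pc (x0,y0,1)" "y0^q + y0 = x0^(q+1)"
    unfolding herm_def by auto
  thus ?thesis
  proof cases
    case inf
    show ?thesis
    proof (rule ex1I[of _ "pg_line (0,0,1)"])
      show "pg_line (0,0,1) \<in> (pg_lines :: ('a \<times> 'a \<times> 'a) set set set) \<and> pg_line (0,0,1) \<inter> herm q = {P}" using line3_in herm_I3 inf by auto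
    next
      fix l assume l: "l \<in> (pg_lines :: ('a \<times> 'a \<times> 'a) set set set) \<and> l \<inter> herm q = {P}"
      from lines_cases[OF conjunct1[OF l]] show "l = pg_line (0,0,1)"
      proof (elim disjE exE)
        fix m b assume lm: "l = pg_line (-m,1,-b)"
        have "pc (0,1,0) \<in> l" using l inf by blast
        hence False unfolding lm by (simp add: inf_in_line)
        thus ?thesis ..
      next
        fix c assume "l = pg_line (1,0,-c)"
        thus ?thesis using l card_I2[of c] q2 by auto
      qed auto
    qed
  next
    case aff
    define m0 where "m0 = x0^q"
    define b0 where "b0 = y0 - m0*x0"
    have mq: "m0^q = x0" unfolding m0_def by (rule pqq')
    have Nm: "m0^(q+1) = x0^(q+1)"
    proof -
      have "m0^(q+1) = (x0^(q+1))^q" unfolding m0_def by (metis power_mult mult.commute)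
      thus ?thesis using N_in_K'[of x0] by (simp add: KK_def')
    qed
    have a0: "b0^q + b0 + m0^(q+1) = 0"
    proof -
      have B: "b0^q = y0^q - x0 * m0" unfolding b0_def by (simp add: frob_diff' power_mult_distrib mq m0_def[symmetric] mult.commute)
      have X: "x0^(q+1) = m0 * x0" by (simp add: m0_def)
      have gen: "\<And>Y YQ M X::'a. YQ + Y = M*X \<Longrightarrow> (YQ - X*M) + (Y - M*X) + M*X = 0"
      proof -
        fix Y YQ M X :: 'a assume h: "YQ + Y = M*X"
        have "(YQ - X*M) + (Y - M*X) + M*X = (YQ + Y) - M*X" by (simp add: algebra_simps)
        thus "(YQ - X*M) + (Y - M*X) + M*X = 0" using h by simp
      qed
      have e: "b0^q + b0 + x0^(q+1) = (y0^q - x0*m0) + (y0 - m0*x0) + m0*x0"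
        by (subst B, subst X, simp add: b0_def)
      have "y0^q + y0 = m0*x0" using aff(2) \<open>x0^(q+1) = m0 * x0\<close> by simp
      from gen[OF this] e have "b0^q + b0 + x0^(q+1) = 0" by simp
      thus ?thesis using Nm by simp
    qed
    show ?thesis
    proof (rule ex1I[of _ "pg_line (-m0,1,-b0)"])
      have "pg_line (-m0,1,-b0) \<inter> herm q = {pc (x0, m0*x0+b0, 1)}"
        unfolding herm_I1 line_set_zero[OF a0] mq by simp
      also have "m0*x0+b0 = y0" by (simp add: b0_def)
      finally show "pg_line (-m0,1,-b0) \<in> (pg_lines :: ('a \<times> 'a \<times> 'a) set set set) \<and> pg_line (-m0,1,-b0) \<inter> herm q = {P}"
        using line1_in aff(1) by auto
    next
      fix l assume l: "l \<in> (pg_lines :: ('a \<times> 'a \<times> 'a) set set set) \<and> l \<inter> herm q = {P}"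
      from lines_cases[OF conjunct1[OF l]] show "l = pg_line (-m0,1,-b0)"
      proof (elim disjE exE)
        fix m b assume lm: "l = pg_line (-m,1,-b)"
        have z: "b^q+b+m^(q+1) = 0"
        proof (rule ccontr)
          assume "b^q+b+m^(q+1) \<noteq> 0"
          hence "card (l \<inter> herm q) = q + 1" using card_I1[of m b] lm by simp
          thus False using l q2 by simp
        qed
        have "l \<inter> herm q = {pc (m^q, m*m^q+b, 1)}" unfolding lm herm_I1 line_set_zero[OF z] by simp
        hence "pc (m^q, m*m^q+b, 1) = pc (x0,y0,1)" using l aff(1) by simp
        hence xy: "m^q = x0" "m*m^q+b = y0" using pc_aff_inj by blast+
        hence "m = m0" unfolding m0_def using pqq'[of m] by simp
        moreover have "b = y0 - m * m^q" using xy(2) by (simp add: algebra_simps)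
        ultimately have "b = b0" unfolding b0_def using xy(1) by simp
        thus ?thesis using lm \<open>m = m0\<close> by simp
      next
        fix c assume "l = pg_line (1,0,-c)"
        thus ?thesis using l card_I2[of c] q2 by auto
      next
        assume "l = pg_line (0,0,1)"
        hence "{pc (0,1,0)} = {P}" using l by (simp add: herm_I3)
        hence "pc (0,1,0) = pc (x0,y0,1)" using aff(1) by simp
        hence False using pc_aff_inf[of x0 y0] by simp
        thus ?thesis ..
      qed
    qed
  qed
qed

lemma card_herm: "card (herm q :: ('a \<times> 'a \<times> 'a) set set) = q^3 + 1"
proof -
  define A where "A = {(x,y). y^q + y = (x::'a)^(q+1)}"
  have A: "A = (SIGMA x:UNIV. {y. y^q + y = x^(q+1)})" unfolding A_def by auto
  have "card A = (\<Sum>x\<in>(UNIV::'a set). card {y. y^q + y = x^(q+1)})" unfolding A by simp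
  also have "\<dots> = (\<Sum>x\<in>(UNIV::'a set). q)" using T_fibre' N_in_K' by simp
  finally have cA: "card A = q^3" using cardF by (simp add: power3_eq_cube power2_eq_square)
  have h: "herm q = insert (pc (0,1,0)) ((\<lambda>(x,y). pc (x,y,1)) ` A)"
    unfolding herm_def A_def by auto
  have inj: "inj_on (\<lambda>(x,y). pc (x,y,1::'a)) A" by (auto simp: inj_on_def dest: pc_aff_inj)
  have "pc (0,1,0) \<notin> (\<lambda>(x,y). pc (x,y,1::'a)) ` A" using pc_aff_inf by fastforce
  thus ?thesis unfolding h using cA by (simp add: card_image[OF inj])
qed

lemma card_lines: "card (pg_lines :: ('a \<times> 'a \<times> 'a) set set set) \<le> q^6"
proof -
  have "pg_lines \<subseteq> range (pg_line :: 'a \<times> 'a \<times> 'a \<Rightarrow> _)" unfolding pg_lines_def by auto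
  hence "card (pg_lines :: ('a \<times> 'a \<times> 'a) set set set) \<le> card (range (pg_line :: 'a \<times> 'a \<times> 'a \<Rightarrow> _))"
    by (intro card_mono) auto
  also have "\<dots> \<le> card (UNIV :: ('a \<times> 'a \<times> 'a) set)" by (rule card_image_le) simp
  also have "\<dots> = q^6"
  proof -
    have u: "(UNIV :: ('a \<times> 'a \<times> 'a) set) = UNIV \<times> (UNIV \<times> UNIV)" by simp
    have "card (UNIV :: ('a \<times> 'a \<times> 'a) set) = q^2 * (q^2 * q^2)"
      unfolding u card_cartesian_product cardF ..
    thus ?thesis by (simp flip: power_add)
  qed
  finally show ?thesis .
qed

end



lemma of_nat_card_zero: "of_nat (card (UNIV::'a::{ring_1,finite} set)) = (0::'a)"
proof -
  have "(\<Sum>x\<in>(UNIV::'a set). x + 1) = (\<Sum>x\<in>(UNIV::'a set). x)"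
    by (rule sum.reindex_bij_witness[of _ "\<lambda>x. x - 1" "\<lambda>x. x + 1"]) auto
  moreover have "(\<Sum>x\<in>(UNIV::'a set). x + 1) = (\<Sum>x\<in>(UNIV::'a set). x) + of_nat (card (UNIV::'a set))"
    by (simp add: sum.distrib)
  ultimately show ?thesis by simp
qed

lemma binom_ratio:
  assumes "k \<le> v"
  shows "r \<le> v \<Longrightarrow> real ((v - r) choose k) \<le> (1 - real k / real v)^r * real (v choose k)"
proof (induction r)
  case 0 thus ?case by simp
next
  case (Suc r)
  have v0: "real v > 0" using Suc.prems by simp
  have ge: "0 \<le> 1 - real k / real v" using assms v0 by (simp add: field_simps)
  define n where "n = v - r"
  have n1: "n \<ge> 1" "n \<le> v" using Suc.prems by (auto simp: n_def)
  have vs: "v - Suc r = n - 1" by (simp add: n_def)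
  have IH: "real (n choose k) \<le> (1 - real k / real v)^r * real (v choose k)"
    using Suc.IH Suc.prems by (simp add: n_def)
  show ?case
  proof (cases "k \<le> n")
    case True
    have "(n - k) * (n choose k) = n * ((n - 1) choose k)" by (rule binomial_absorb_comp)
    hence "real (n - k) * real (n choose k) = real n * real ((n - 1) choose k)"
      by (metis of_nat_mult)
    hence e: "real ((n - 1) choose k) = (1 - real k / real n) * real (n choose k)"
      using n1 True by (simp add: of_nat_diff field_simps)
    have "1 - real k / real n \<le> 1 - real k / real v"
      using n1 by (simp add: frac_le)
    hence "real ((n - 1) choose k) \<le> (1 - real k / real v) * real (n choose k)"
      unfolding e by (rule mult_right_mono) simp
    also have "\<dots> \<le> (1 - real k / real v) * ((1 - real k / real v)^r * real (v choose k))"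
      by (rule mult_left_mono[OF IH ge])
    finally show ?thesis unfolding vs by simp
  next
    case False
    hence z: "real ((n - 1) choose k) = 0" by simp
    have "0 \<le> (1 - real k / real v)^(Suc r) * real (v choose k)" using ge by simp
    thus ?thesis unfolding vs z .
  qed
qed

context
  fixes q :: nat
  assumes cardF: "card (UNIV :: 'a::{field,finite} set) = q^2"
  and frob: "\<And>x y::'a. (x+y)^q = x^q + y^q"
  and q2: "q \<ge> 2"
begin

lemmas line_card' = line_card[OF cardF frob q2]
lemmas tangent_unique' = tangent_unique[OF cardF frob q2]
lemmas card_herm' = card_herm[OF cardF frob q2]
lemmas card_lines' = card_lines[OF cardF frob q2]

lemma good_semioval:
  fixes X :: "('a \<times> 'a \<times> 'a) set set"
  assumes XH: "X \<subseteq> herm q" and ne: "X \<noteq> {}"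
  and good: "\<And>l b. l \<in> pg_lines \<Longrightarrow> card (l \<inter> herm q) = q + 1 \<Longrightarrow> b \<in> l \<inter> herm q \<Longrightarrow> X \<inter> (l \<inter> herm q - {b}) \<noteq> {}"
  shows "semioval X"
  unfolding semioval_def
proof (intro conjI ballI)
  show "X \<noteq> {}" by fact
  show "X \<subseteq> pg_points" using XH herm_points by blast
  fix P assume P: "P \<in> X"
  hence PH: "P \<in> herm q" using XH by blast
  have ex: "\<exists>!l. l \<in> (pg_lines :: ('a \<times> 'a \<times> 'a) set set set) \<and> l \<inter> herm q = {P}"
    by (rule tangent_unique'[OF PH])
  hence "\<exists>l. l \<in> (pg_lines :: ('a \<times> 'a \<times> 'a) set set set) \<and> l \<inter> herm q = {P}" by (rule ex1_implies_ex)
  then obtain t0 where t0': "t0 \<in> (pg_lines :: ('a \<times> 'a \<times> 'a) set set set) \<and> t0 \<inter> herm q = {P}" by blast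
  hence t0: "t0 \<in> pg_lines" "t0 \<inter> herm q = {P}" by auto
  have uniq: "l = t0" if "l \<in> (pg_lines :: ('a \<times> 'a \<times> 'a) set set set) \<and> l \<inter> herm q = {P}" for l
    using the1_equality[OF ex that] the1_equality[OF ex t0'] by simp
  show "\<exists>!t. t \<in> pg_lines \<and> X \<inter> t = {P}"
  proof (rule ex1I[of _ t0])
    show "t0 \<in> pg_lines \<and> X \<inter> t0 = {P}" using t0 P XH by blast
  next
    fix t assume t: "t \<in> pg_lines \<and> X \<inter> t = {P}"
    hence Pt: "P \<in> t \<inter> herm q" using PH by blast
    from line_card'[OF conjunct1[OF t]] show "t = t0"
    proof
      assume "card (t \<inter> herm q) = 1"
      then obtain z where "t \<inter> herm q = {z}" by (rule card_1_singletonE)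
      hence "t \<inter> herm q = {P}" using Pt by simp
      thus ?thesis using uniq t by blast
    next
      assume "card (t \<inter> herm q) = q + 1"
      from good[OF _ this Pt] t have False by blast
      thus ?thesis ..
    qed
  qed
qed

lemma exists_semioval:
  assumes kv: "k \<le> q^3 + 1" and k0: "k > 0"
  and kb: "real k \<ge> real (q^3+1) * 8 * ln (real q) / (real q - 1)"
  shows "\<exists>S :: ('a \<times> 'a \<times> 'a) set set. semioval S \<and> card S = k"
proof -
  define H where "H = (herm q :: ('a \<times> 'a \<times> 'a) set set)"
  define v where "v = q^3 + 1"
  have cH: "card H = v" unfolding H_def v_def by (rule card_herm')
  define Bl where "Bl = (\<lambda>l. l \<inter> H) ` {l \<in> (pg_lines :: ('a \<times> 'a \<times> 'a) set set set). card (l \<inter> H) = q + 1}"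
  have cBl: "card Bl \<le> q^6"
  proof -
    have "card Bl \<le> card {l \<in> (pg_lines :: ('a \<times> 'a \<times> 'a) set set set). card (l \<inter> H) = q + 1}"
      unfolding Bl_def by (rule card_image_le) simp
    also have "\<dots> \<le> card (pg_lines :: ('a \<times> 'a \<times> 'a) set set set)" by (rule card_mono) auto
    finally show ?thesis using card_lines' by linarith
  qed
  have BlH: "B \<subseteq> H" "card B = q + 1" if "B \<in> Bl" for B using that unfolding Bl_def by auto
  define All where "All = {X. X \<subseteq> H \<and> card X = k}"
  define Bad where "Bad = (\<Union>B\<in>Bl. \<Union>b\<in>B. {X. X \<subseteq> H - (B - {b}) \<and> card X = k})"
  have cAll: "card All = v choose k" unfolding All_def using cH by (simp add: n_subsets)
  have cinner: "card {X. X \<subseteq> H - (B - {b}) \<and> card X = k} = (v - q) choose k" if "B \<in> Bl" "b \<in> B" for B b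
  proof -
    have "card (B - {b}) = q" using BlH[OF that(1)] that(2) by simp
    moreover have "B - {b} \<subseteq> H" using BlH[OF that(1)] by auto
    ultimately have "card (H - (B - {b})) = v - q" using cH by (simp add: card_Diff_subset)
    thus ?thesis by (simp add: n_subsets)
  qed
  have "card Bad \<le> (\<Sum>B\<in>Bl. card (\<Union>b\<in>B. {X. X \<subseteq> H - (B - {b}) \<and> card X = k}))"
    unfolding Bad_def by (rule card_UN_le) simp
  also have "\<dots> \<le> (\<Sum>B\<in>Bl. (q+1) * ((v - q) choose k))"
  proof (rule sum_mono)
    fix B assume B: "B \<in> Bl"
    have "card (\<Union>b\<in>B. {X. X \<subseteq> H - (B - {b}) \<and> card X = k}) \<le> (\<Sum>b\<in>B. card {X. X \<subseteq> H - (B - {b}) \<and> card X = k})"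
      by (rule card_UN_le) simp
    also have "\<dots> = (\<Sum>b\<in>B. (v - q) choose k)" using cinner[OF B] by simp
    also have "\<dots> = (q+1) * ((v - q) choose k)" using BlH[OF B] by simp
    finally show "card (\<Union>b\<in>B. {X. X \<subseteq> H - (B - {b}) \<and> card X = k}) \<le> (q+1) * ((v - q) choose k)" .
  qed
  also have "\<dots> = card Bl * ((q+1) * ((v - q) choose k))" by simp
  also have "\<dots> \<le> q^6 * ((q+1) * ((v - q) choose k))" by (rule mult_right_mono[OF cBl]) simp
  finally have cBad: "card Bad \<le> q^6 * ((q+1) * ((v - q) choose k))" .
  have qr: "real q \<ge> 2" using q2 by simp
  have "v > 0" by (simp add: v_def)
  hence v0: "real v > 0" by simp
  have kv': "k \<le> v" using kv by (simp add: v_def)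
  have lnq: "ln (real q) \<ge> 0" using qr by simp
  have "real k * real q \<ge> real v * (8 * ln (real q))"
  proof -
    have "real k * (real q - 1) \<ge> real v * 8 * ln (real q)"
      using kb qr by (simp add: v_def field_simps)
    moreover have "real v * (8 * ln (real q)) \<ge> 0" using lnq by simp
    ultimately show ?thesis by (simp add: algebra_simps)
  qed
  hence t: "real k * real q / real v \<ge> 8 * ln (real q)" using v0 by (simp add: field_simps)
  have e1: "1 - real k / real v \<le> exp (- (real k / real v))"
    using exp_ge_add_one_self[of "- (real k / real v)"] by simp
  have e0: "0 \<le> 1 - real k / real v" using v0 kv' by (simp add: field_simps)
  have b1: "(1 - real k / real v) ^ q \<le> exp (- (real k / real v)) ^ q"
    by (rule power_mono[OF e1 e0])
  also have "\<dots> = exp (- (real k * real q / real v))"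
    by (simp add: exp_of_nat_mult[symmetric] mult.commute)
  also have "\<dots> \<le> exp (- (8 * ln (real q)))" using t by simp
  also have "\<dots> = 1 / real q ^ 8"
  proof -
    have "exp (real 8 * ln (real q)) = exp (ln (real q)) ^ 8" by (rule exp_of_nat_mult)
    hence "exp (8 * ln (real q)) = real q ^ 8" using qr by simp
    thus ?thesis by (simp add: exp_minus divide_inverse)
  qed
  finally have b2: "(1 - real k / real v) ^ q \<le> 1 / real q ^ 8" .
  have bin: "real ((v - q) choose k) \<le> real (v choose k) / real q ^ 8"
  proof -
    have "real ((v - q) choose k) \<le> (1 - real k / real v) ^ q * real (v choose k)"
    proof (rule binom_ratio[OF kv'])
      have "0 < q * q" using q2 by simp
      hence "q * 1 \<le> q * (q * q)" by (intro mult_le_mono2) simp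
      hence "q \<le> q * q * q" by (simp add: mult.assoc)
      thus "q \<le> v" unfolding v_def power3_eq_cube by linarith
    qed
    also have "\<dots> \<le> (1 / real q ^ 8) * real (v choose k)" by (rule mult_right_mono[OF b2]) simp
    finally show ?thesis by simp
  qed
  have Cpos: "real (v choose k) > 0" using kv' by simp
  have "real (card Bad) \<le> real (q^6 * ((q+1) * ((v - q) choose k)))"
    using cBad by (simp only: of_nat_le_iff)
  also have "\<dots> = real q ^ 6 * (real q + 1) * real ((v - q) choose k)" by (simp add: algebra_simps)
  also have "\<dots> \<le> real q ^ 6 * (real q + 1) * (real (v choose k) / real q ^ 8)"
    by (rule mult_left_mono[OF bin]) simp
  also have "\<dots> < real (v choose k)"
  proof -
    have "real q ^ 2 \<ge> 2 * real q" using qr by (simp add: power2_eq_square mult_right_mono)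
    hence "real q + 1 < real q ^ 2" using qr by linarith
    hence "real q ^ 6 * (real q + 1) < real q ^ 6 * real q ^ 2"
      using qr by (intro mult_strict_left_mono) auto
    also have "real q ^ 6 * real q ^ 2 = real q ^ 8" by (simp flip: power_add)
    finally have "real q ^ 6 * (real q + 1) < real q ^ 8" .
    hence "real q ^ 6 * (real q + 1) / real q ^ 8 < 1" using qr by simp
    hence "real q ^ 6 * (real q + 1) / real q ^ 8 * real (v choose k) < 1 * real (v choose k)"
      using Cpos by (intro mult_strict_right_mono) auto
    thus ?thesis by simp
  qed
  finally have "real (card Bad) < real (card All)" unfolding cAll .
  hence lt: "card Bad < card All" by (simp only: of_nat_less_iff)
  have "\<not> All \<subseteq> Bad"
  proof
    assume "All \<subseteq> Bad"
    hence "card All \<le> card Bad" by (intro card_mono) simp_all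
    with lt show False by simp
  qed
  hence "\<exists>X. X \<in> All \<and> X \<notin> Bad" by (simp only: subset_iff not_all not_imp)
  then obtain X where X: "X \<in> All" "X \<notin> Bad" by (elim exE conjE)
  have XA: "X \<subseteq> H" "card X = k" using X(1) unfolding All_def by simp_all
  have "semioval X"
  proof (rule good_semioval)
    show "X \<subseteq> herm q" using XA(1) by (simp only: H_def)
    show "X \<noteq> {}" using XA(2) k0 by (intro notI) simp
    fix l :: "('a \<times> 'a \<times> 'a) set set" and b assume l: "l \<in> pg_lines" "card (l \<inter> herm q) = q + 1" and b: "b \<in> l \<inter> herm q"
    have lB: "l \<inter> H \<in> Bl" unfolding Bl_def H_def using l by (intro imageI) simp
    have bB: "b \<in> l \<inter> H" using b by (simp add: H_def)
    have "\<not> (X \<subseteq> H - (l \<inter> H - {b}))"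
    proof
      assume sub: "X \<subseteq> H - (l \<inter> H - {b})"
      note XA(2)
      hence mem: "X \<in> {Y. Y \<subseteq> H - (l \<inter> H - {b}) \<and> card Y = k}" using sub by simp
      have "X \<in> (\<Union>b'\<in>l \<inter> H. {Y. Y \<subseteq> H - (l \<inter> H - {b'}) \<and> card Y = k})"
        by (rule UN_I[OF bB]) (rule mem)
      hence "X \<in> Bad" unfolding Bad_def by (rule UN_I[OF lB])
      with X(2) show False by simp
    qed
    thus "X \<inter> (l \<inter> herm q - {b}) \<noteq> {}" using XA(1) unfolding H_def by blast
  qed
  thus ?thesis using XA(2) by blast
qed

end



theorem mainTheorem8:
  fixes q k :: nat
  assumes "\<exists>p n. prime p \<and> n > 0 \<and> q = p ^ n"
    and "odd q" and "q > 27"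
    and "card (UNIV :: 'a::{field,finite} set) = q ^ 2"
    and "int (q ^ 2 - q + 1) * \<lceil>8 * (real q + 1) / (real q - 1) * ln (real q)\<rceil> \<le> int k"
    and "k \<le> q ^ 3 + 1"
  shows "\<exists>S :: ('a \<times> 'a \<times> 'a) set set. semioval S \<and> card S = k"
proof -
  obtain p n where pn: "prime p" "n > 0" "q = p ^ n" using assms(1) by blast
  have q2: "q \<ge> 2" using assms(3) by simp
  have cpos: "CHAR('a) > 0" by (rule finite_imp_CHAR_pos) simp
  have cp: "prime CHAR('a)" by (rule prime_CHAR_semidom[OF cpos])
  have "of_nat (card (UNIV::'a set)) = (0::'a)" by (rule of_nat_card_zero)
  hence "CHAR('a) dvd card (UNIV::'a set)" by (simp add: of_nat_eq_0_iff_char_dvd)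
  hence "CHAR('a) dvd p ^ (n*2)" using assms(4) pn(3) by (simp add: power_mult)
  hence "CHAR('a) dvd p" using cp prime_dvd_power by blast
  hence chp: "CHAR('a) = p" using cp pn(1) primes_dvd_imp_eq by blast
  have frob: "(x+y)^q = x^q + y^q" for x y :: 'a
    by (rule freshmans_dream'[where m = q and n = n]) (use cp chp pn(3) in auto)
  define E where "E = 8 * (real q + 1) / (real q - 1) * ln (real q)"
  have qr: "real q \<ge> 28" using assms(3) by simp
  have lnq: "ln (real q) > 0" using qr by simp
  have h5: "int (q^2-q+1) * \<lceil>E\<rceil> \<le> int k" using assms(5) by (simp add: E_def)
  have "real_of_int (int (q^2-q+1) * \<lceil>E\<rceil>) \<le> real_of_int (int k)" using h5 by (simp only: of_int_le_iff)
  hence A: "real (q^2-q+1) * real_of_int \<lceil>E\<rceil> \<le> real k" by simp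
  have B: "real (q^2-q+1) * E \<le> real (q^2-q+1) * real_of_int \<lceil>E\<rceil>"
    by (intro mult_left_mono) (simp_all add: le_of_int_ceiling)
  have "0 < q * q" using q2 by simp
  hence "q * 1 \<le> q * q" by (intro mult_le_mono2) simp
  hence "q \<le> q^2" by (simp add: power2_eq_square)
  hence nq: "real (q^2-q+1) = real q^2 - real q + 1" by (simp add: of_nat_diff)
  have q1: "real q - 1 \<noteq> 0" using qr by simp
  have eq: "(real q^2 - real q + 1) * E = real (q^3+1) * 8 * ln (real q) / (real q - 1)"
    unfolding E_def using q1 by (simp add: field_simps power2_eq_square power3_eq_cube)
  have eq2: "real (q^3+1) * 8 * ln (real q) / (real q - 1) = real (q^2-q+1) * E"
    by (subst nq) (rule eq[symmetric])
  have kb: "real k \<ge> real (q^3+1) * 8 * ln (real q) / (real q - 1)"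
    unfolding eq2 using A B by linarith
  have "real (q^3+1) * 8 * ln (real q) / (real q - 1) > 0"
    using lnq qr by (intro divide_pos_pos mult_pos_pos) (simp_all add: add_pos_nonneg)
  hence k0: "k > 0" using kb by linarith
  show ?thesis by (rule exists_semioval[OF assms(4) frob q2 assms(6) k0 kb])
qed


end
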